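(* Let $1\le p<\infty$ and consider $\ell_p$ as a Banach algebra under coordinatewise multiplication. Let $w=(w(n))_{n\ge2}$ be a bounded sequence of non-zero complex numbers and $B_w(x(1),x(2),x(3),\ldots)=(w(2)x(2),w(3)x(3),w(4)x(4),\ldots)$ the weighted backward shift on $\ell_p$. Assume that $|w(n)|\ge1$ for all $n\ge2$ and that, for some integer $m\ge2$, $\sum_{n=2}^\infty\frac{1}{|w(2)w(3)\cdots w(n)|^{p/m}}=\infty$. Then for any $x\in\ell_p$, $x^m$ is not frequently hypercyclic for $B_w$. In particular, $B_w$ does not have any frequently hypercyclic algebra.
   Context: A vector $x$ is frequently hypercyclic for $T$ if for every non-empty open $U$ the set $\{n\in\mathbb N_0:T^nx\in U\}$ has positive lower density $\liminf_{N\to\infty}\frac{\mathrm{card}(A\cap[0,N])}{N+1}$. A frequently hypercyclic algebra is a subalgebra $\ne\{0\}$ all of whose non-zero elements are frequently hypercyclic. Powers are coordinatewise. *)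

theory Defs
  imports "HOL-Analysis.Analysis"
begin

text \<open>Sequences are indexed from 0: the Isabelle sequence x corresponds to the paper's
  (x(1), x(2), ...) via x i = x(i+1). Weights keep the paper's indexing w n, n >= 2.\<close>

definition lp :: "real \<Rightarrow> (nat \<Rightarrow> complex) set" where
  "lp p = {x. summable (\<lambda>i. cmod (x i) powr p)}"

definition lp_norm :: "real \<Rightarrow> (nat \<Rightarrow> complex) \<Rightarrow> real" where
  "lp_norm p x = (\<Sum>i. cmod (x i) powr p) powr (1 / p)"

definition lp_open :: "real \<Rightarrow> (nat \<Rightarrow> complex) set \<Rightarrow> bool" where
  "lp_open p U \<longleftrightarrow> U \<subseteq> lp p \<and>
     (\<forall>y\<in>U. \<exists>e>0. \<forall>z\<in>lp p. lp_norm p (\<lambda>i. z i - y i) < e \<longrightarrow> z \<in> U)"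

text \<open>Weighted backward shift: (B_w x)(n) = w(n+1) x(n+1) in the paper's indexing.\<close>
definition bshift :: "(nat \<Rightarrow> complex) \<Rightarrow> (nat \<Rightarrow> complex) \<Rightarrow> (nat \<Rightarrow> complex)" where
  "bshift w x = (\<lambda>i. w (i + 2) * x (i + 1))"

definition lower_density :: "nat set \<Rightarrow> ereal" where
  "lower_density A = liminf (\<lambda>N. ereal (real (card (A \<inter> {0..N})) / real (N + 1)))"

definition freq_hypercyclic ::
  "real \<Rightarrow> ((nat \<Rightarrow> complex) \<Rightarrow> (nat \<Rightarrow> complex)) \<Rightarrow> (nat \<Rightarrow> complex) \<Rightarrow> bool" where
  "freq_hypercyclic p T x \<longleftrightarrow> x \<in> lp p \<and>
     (\<forall>U. lp_open p U \<and> U \<noteq> {} \<longrightarrow> lower_density {n. (T ^^ n) x \<in> U} > 0)"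

definition lp_subalgebra :: "real \<Rightarrow> (nat \<Rightarrow> complex) set \<Rightarrow> bool" where
  "lp_subalgebra p A \<longleftrightarrow> A \<subseteq> lp p \<and> (\<lambda>i. 0) \<in> A \<and>
     (\<forall>x\<in>A. \<forall>y\<in>A. (\<lambda>i. x i + y i) \<in> A \<and> (\<lambda>i. x i * y i) \<in> A) \<and>
     (\<forall>c::complex. \<forall>x\<in>A. (\<lambda>i. c * x i) \<in> A)"

definition freq_hypercyclic_algebra ::
  "real \<Rightarrow> ((nat \<Rightarrow> complex) \<Rightarrow> (nat \<Rightarrow> complex)) \<Rightarrow> (nat \<Rightarrow> complex) set \<Rightarrow> bool" where
  "freq_hypercyclic_algebra p T A \<longleftrightarrow> lp_subalgebra p A \<and> A \<noteq> {\<lambda>i. 0} \<and>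
     (\<forall>x\<in>A. x \<noteq> (\<lambda>i. 0) \<longrightarrow> freq_hypercyclic p T x)"

end

theory Submission
  imports Defs
begin

lemma dens_sum:
  fixes a :: "nat \<Rightarrow> real" and A :: "nat set" and \<delta> K :: real
  assumes a0: "\<And>n. 0 \<le> a n" and adec: "\<And>n. a (Suc n) \<le> a n" and dpos: "\<delta> > 0"
    and dens: "\<And>N. N \<ge> N0 \<Longrightarrow> \<delta> * (real N + 1) \<le> real (card (A \<inter> {..N}))"
    and bnd: "\<And>N. (\<Sum>n\<in>A \<inter> {..N}. a n) \<le> K"
  shows "summable a"
proof -
  define f where "f N = real (card (A \<inter> {..N}))" for N
  define SA where "SA N = (\<Sum>n\<in>A \<inter> {..N}. a n)" for N
  define S where "S N = (\<Sum>n\<in>{..N}. a n)" for N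
  define C where "C = (f N0 - \<delta> * (real N0 + 1)) * a N0 - (SA N0 - \<delta> * S N0)"
  have stepA: "A \<inter> {..Suc N} = (if Suc N \<in> A then insert (Suc N) (A \<inter> {..N}) else A \<inter> {..N})" for N
    by (auto simp: atMost_Suc)
  have fS: "f (Suc N) = f N + (if Suc N \<in> A then 1 else 0)" for N
    unfolding f_def by (subst stepA) auto
  have SAS: "SA (Suc N) = SA N + (if Suc N \<in> A then a (Suc N) else 0)" for N
    unfolding SA_def by (subst stepA) auto
  have SS: "S (Suc N) = S N + a (Suc N)" for N
    unfolding S_def by simp
  have inv: "SA (N0 + k) - \<delta> * S (N0 + k) \<ge> (f (N0 + k) - \<delta> * (real (N0 + k) + 1)) * a (N0 + k) - C" for k
  proof (induction k)
    case 0
    then show ?case by (simp add: C_def)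
  next
    case (Suc k)
    let ?N = "N0 + k"
    have nn: "f ?N - \<delta> * (real ?N + 1) \<ge> 0" using dens[of ?N] by (simp add: f_def)
    have "(f ?N - \<delta> * (real ?N + 1)) * a (Suc ?N) \<le> (f ?N - \<delta> * (real ?N + 1)) * a ?N"
      by (rule mult_left_mono[OF adec nn])
    define ind :: real where "ind = (if Suc ?N \<in> A then 1 else 0)"
    define d where "d = f ?N - \<delta> * (real ?N + 1)"
    have h1: "SA (Suc ?N) = SA ?N + ind * a (Suc ?N)" unfolding ind_def using SAS[of ?N] by simp
    have h2: "f (Suc ?N) = f ?N + ind" unfolding ind_def using fS[of ?N] by simp
    have h3: "(f (Suc ?N) - \<delta> * (real (Suc ?N) + 1)) * a (Suc ?N)
        = d * a (Suc ?N) + ind * a (Suc ?N) - \<delta> * a (Suc ?N)"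
      unfolding h2 d_def by (simp add: algebra_simps)
    have h4: "\<delta> * S (Suc ?N) = \<delta> * S ?N + \<delta> * a (Suc ?N)" using SS[of ?N] by (simp add: algebra_simps)
    have IH: "SA ?N - \<delta> * S ?N \<ge> d * a ?N - C" using Suc.IH unfolding d_def by simp
    have "d * a (Suc ?N) \<le> d * a ?N" using \<open>(f ?N - _) * _ \<le> _\<close> unfolding d_def .
    moreover have e: "N0 + Suc k = Suc ?N" by simp
    ultimately show ?case unfolding e using IH h1 h3 h4 by linarith
  qed
  have low: "SA N - \<delta> * S N \<ge> - C" if hN: "N \<ge> N0" for N
  proof -
    obtain k where k: "N = N0 + k" using le_Suc_ex[OF hN] by blast
    have nn: "f N - \<delta> * (real N + 1) \<ge> 0" using dens[OF hN] unfolding f_def by linarith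
    have "0 \<le> (f N - \<delta> * (real N + 1)) * a N" by (rule mult_nonneg_nonneg[OF nn a0])
    then show ?thesis using inv[of k] unfolding k[symmetric] by linarith
  qed
  have Smono: "S N \<le> S M" if "N \<le> M" for N M
    unfolding S_def by (rule sum_mono2) (use that a0 in force)+
  have "S N \<le> max ((K + C) / \<delta>) (S N0)" for N
  proof (cases "N \<ge> N0")
    case True
    have "SA N \<le> K" using bnd[of N] by (simp add: SA_def)
    then have "\<delta> * S N \<le> K + C" using low[OF True] by linarith
    then have "S N \<le> (K + C) / \<delta>" using dpos by (simp add: pos_le_divide_eq mult.commute)
    then show ?thesis by simp
  next
    case False
    then have "S N \<le> S N0" using Smono[of N N0] by linarith
    then show ?thesis by linarith
  qed
  then have "sum a {..N} \<le> max ((K + C) / \<delta>) (S N0)" for N unfolding S_def .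
  then show ?thesis
    by (rule bounded_imp_summable[OF a0])
qed


lemma lp_diff:
  assumes "y \<in> lp p" "z \<in> lp p" "p \<ge> 0"
  shows "(\<lambda>i. z i - y i) \<in> lp p"
proof -
  have b: "cmod (z i - y i) powr p \<le> 2 powr p * (cmod (z i) powr p + cmod (y i) powr p)" for i
  proof -
    have t: "cmod (z i - y i) \<le> cmod (z i) + cmod (y i)" by (rule norm_triangle_ineq4)
    show ?thesis
    proof (cases "cmod (z i) \<le> cmod (y i)")
      case True
      have "cmod (z i - y i) powr p \<le> (2 * cmod (y i)) powr p"
        using t True assms(3) by (intro powr_mono2) auto
      also have "\<dots> = 2 powr p * cmod (y i) powr p" by (simp add: powr_mult)
      also have "\<dots> \<le> 2 powr p * (cmod (z i) powr p + cmod (y i) powr p)"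
        by (intro mult_left_mono) auto
      finally show ?thesis .
    next
      case False
      have "cmod (z i - y i) powr p \<le> (2 * cmod (z i)) powr p"
        using t False assms(3) by (intro powr_mono2) auto
      also have "\<dots> = 2 powr p * cmod (z i) powr p" by (simp add: powr_mult)
      also have "\<dots> \<le> 2 powr p * (cmod (z i) powr p + cmod (y i) powr p)"
        by (intro mult_left_mono) auto
      finally show ?thesis .
    qed
  qed
  have s: "summable (\<lambda>i. 2 powr p * (cmod (z i) powr p + cmod (y i) powr p))"
    using assms(1,2) unfolding lp_def by (intro summable_mult summable_add) auto
  show ?thesis unfolding lp_def
    by (rule CollectI, rule summable_comparison_test'[OF s]) (use b in auto)
qed

lemma coord_le:
  assumes "v \<in> lp p" "p > 0"
  shows "cmod (v i) \<le> lp_norm p v"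
proof -
  have "cmod (v i) powr p \<le> (\<Sum>j. cmod (v j) powr p)"
    using sum_le_suminf[of "\<lambda>j. cmod (v j) powr p" "{i}"] assms(1) unfolding lp_def by auto
  then have "(cmod (v i) powr p) powr (1/p) \<le> (\<Sum>j. cmod (v j) powr p) powr (1/p)"
    using assms(2) by (intro powr_mono2) auto
  moreover have "(cmod (v i) powr p) powr (1/p) = cmod (v i)"
    using assms(2) by (simp add: powr_powr)
  ultimately show ?thesis unfolding lp_norm_def by simp
qed

lemma U_open:
  assumes "p \<ge> 1"
  shows "lp_open p {z \<in> lp p. cmod (z 0 - 1) < 1/2}"
  unfolding lp_open_def
proof (intro conjI ballI)
  fix y assume y: "y \<in> {z \<in> lp p. cmod (z 0 - 1) < 1/2}"
  show "\<exists>e>0. \<forall>z\<in>lp p. lp_norm p (\<lambda>i. z i - y i) < e \<longrightarrow> z \<in> {z \<in> lp p. cmod (z 0 - 1) < 1/2}"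
  proof (intro exI[of _ "1/2 - cmod (y 0 - 1)"] conjI ballI impI)
    show "0 < 1/2 - cmod (y 0 - 1)" using y by simp
    fix z assume z: "z \<in> lp p" and lt: "lp_norm p (\<lambda>i. z i - y i) < 1/2 - cmod (y 0 - 1)"
    have "cmod (z 0 - y 0) \<le> lp_norm p (\<lambda>i. z i - y i)"
      using coord_le[OF lp_diff[of y p z] , of 0] y z assms by auto
    moreover have "cmod (z 0 - 1) \<le> cmod (z 0 - y 0) + cmod (y 0 - 1)"
      using norm_triangle_ineq[of "z 0 - y 0" "y 0 - 1"] by simp
    ultimately show "z \<in> {z \<in> lp p. cmod (z 0 - 1) < 1/2}" using z lt by auto
  qed
qed auto

lemma U_ne:
  "(\<lambda>i. if i = 0 then 1 else 0) \<in> {z \<in> lp p. cmod (z 0 - 1) < 1/2}"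
proof -
  have "summable (\<lambda>i. cmod (if i = 0 then (1::complex) else 0) powr p)"
    by (rule summable_finite[of "{0}"]) auto
  then show ?thesis unfolding lp_def by simp
qed

lemma bshift_iter:
  "(bshift w ^^ n) y i = (\<Prod>k\<in>{i+2..i+n+1}. w k) * y (i + n)"
proof (induction n arbitrary: i)
  case 0
  then show ?case by simp
next
  case (Suc n)
  have "(bshift w ^^ Suc n) y i = w (i + 2) * (bshift w ^^ n) y (i + 1)"
    by (simp add: bshift_def)
  also have "\<dots> = w (i + 2) * ((\<Prod>k\<in>{Suc (i+2)..i+Suc n+1}. w k) * y (i + Suc n))"
    using Suc.IH[of "i+1"] by simp
  also have "\<dots> = (\<Prod>k\<in>{i+2..i+Suc n+1}. w k) * y (i + Suc n)"
    by (subst prod.atLeast_Suc_atMost[of "i+2"]) (simp_all add: mult.assoc)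
  finally show ?case .
qed


lemma part1:
  fixes p :: real and w :: "nat \<Rightarrow> complex" and m :: nat
  assumes p1: "1 \<le> p"
    and w1: "\<forall>n\<ge>2. cmod (w n) \<ge> 1"
    and m2: "m \<ge> 2"
    and ns: "\<not> summable (\<lambda>j. 1 / cmod (\<Prod>k\<in>{2..j+2}. w k) powr (p / real m))"
    and x: "x \<in> lp p"
  shows "\<not> freq_hypercyclic p (bshift w) (\<lambda>i. x i ^ m)"
proof
  assume fh: "freq_hypercyclic p (bshift w) (\<lambda>i. x i ^ m)"
  define U where "U = {z \<in> lp p. cmod (z 0 - 1) < 1/2}"
  define A where "A = {n. (bshift w ^^ n) (\<lambda>i. x i ^ m) \<in> U}"
  have "lower_density A > 0"
    using fh U_open[OF p1] U_ne[of p] unfolding freq_hypercyclic_def A_def U_def by blast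
  then obtain \<delta> where d0: "0 < ereal \<delta>" and dl: "ereal \<delta> < lower_density A"
    using ereal_dense2 by blast
  have dpos: "\<delta> > 0" using d0 by simp
  have "eventually (\<lambda>N. ereal \<delta> < ereal (real (card (A \<inter> {0..N})) / real (N + 1))) sequentially"
    using less_LiminfD[OF dl[unfolded lower_density_def]] .
  then obtain N0 where N0: "\<And>N. N \<ge> N0 \<Longrightarrow> \<delta> < real (card (A \<inter> {0..N})) / real (N + 1)"
    unfolding eventually_sequentially by auto
  have dens: "\<delta> * (real N + 1) \<le> real (card (A \<inter> {..N}))" if "N \<ge> N0" for N
  proof -
    have "\<delta> < real (card (A \<inter> {..N})) / (real N + 1)"
      using N0[OF that] by (simp add: atLeast0AtMost add.commute)
    then show ?thesis by (simp add: pos_less_divide_eq less_imp_le)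
  qed
  define W where "W n = (\<Prod>k\<in>{2..n+1}. w k)" for n
  define a where "a n = 1 / cmod (W n) powr (p / real m)" for n
  have WS: "W (Suc n) = w (n + 2) * W n" for n
  proof -
    have "{2..Suc n + 1} = insert (n+2) {2..n+1}" by auto
    then show ?thesis unfolding W_def by simp
  qed
  have Wge: "cmod (W n) \<ge> 1" for n
  proof (induction n)
    case 0 then show ?case by (simp add: W_def)
  next
    case (Suc n)
    have "1 \<le> cmod (w (n+2))" using w1 by simp
    then have "1 * 1 \<le> cmod (w (n+2)) * cmod (W n)"
      using Suc.IH by (intro mult_mono) auto
    then show ?case by (simp add: WS norm_mult)
  qed
  have Wmono: "cmod (W n) \<le> cmod (W (Suc n))" for n
  proof -
    have "1 \<le> cmod (w (n+2))" using w1 by simp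
    then have "1 * cmod (W n) \<le> cmod (w (n+2)) * cmod (W n)"
      by (intro mult_right_mono) auto
    then show ?thesis by (simp add: WS norm_mult)
  qed
  have qpos: "p / real m \<ge> 0" using p1 m2 by simp
  have a0: "0 \<le> a n" for n unfolding a_def by simp
  have adec: "a (Suc n) \<le> a n" for n
  proof -
    have pos: "0 < cmod (W n) powr (p / real m)" using Wge[of n] by (metis norm_zero not_one_le_zero powr_gt_zero)
    have "cmod (W n) powr (p / real m) \<le> cmod (W (Suc n)) powr (p / real m)"
      using Wmono[of n] Wge[of n] qpos by (intro powr_mono2) auto
    moreover have "0 < cmod (W (Suc n)) powr (p / real m) * cmod (W n) powr (p / real m)"
      using pos calculation by (intro mult_pos_pos) linarith+
    ultimately show ?thesis unfolding a_def using pos by (intro divide_left_mono) auto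
  qed
  define c where "c = (1/2::real) powr (p / real m)"
  have cpos: "c > 0" unfolding c_def by simp
  have key: "c * a n \<le> cmod (x n) powr p" if "n \<in> A" for n
  proof -
    have "cmod ((bshift w ^^ n) (\<lambda>i. x i ^ m) 0 - 1) < 1/2"
      using that unfolding A_def U_def by simp
    moreover have "(bshift w ^^ n) (\<lambda>i. x i ^ m) 0 = W n * x n ^ m"
      using bshift_iter[where w=w and n=n and y="\<lambda>i. x i ^ m" and i=0] unfolding W_def by (simp only: add_0)
    ultimately have h: "cmod (W n * x n ^ m - 1) < 1/2" by simp
    have "cmod ((W n * x n ^ m) - (W n * x n ^ m - 1)) \<le> cmod (W n * x n ^ m) + cmod (W n * x n ^ m - 1)"
      by (rule norm_triangle_ineq4)
    then have "1 \<le> cmod (W n * x n ^ m) + cmod (W n * x n ^ m - 1)" by simp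
    with h have g: "cmod (W n) * cmod (x n) ^ m > 1/2" by (simp add: norm_mult norm_power)
    define V where "V = cmod (W n)"
    define t where "t = cmod (x n)"
    have V1: "V \<ge> 1" using Wge unfolding V_def by simp
    have g': "V * t ^ m > 1/2" using g unfolding V_def t_def .
    have tm: "t ^ m > 1 / (2 * V)" using g' V1 by (simp add: field_simps)
    have t0: "t \<ge> 0" unfolding t_def by simp
    have tpos: "t > 0"
    proof (rule ccontr)
      assume "\<not> t > 0" then have "t = 0" using t0 by simp
      then have tm0: "t ^ m = 0" using m2 by (simp add: power_0_left)
      have "V * t ^ m > 1/2" by (rule g')
      then show False unfolding tm0 by simp
    qed
    have "t powr p = (t powr real m) powr (p / real m)"
      using m2 by (simp add: powr_powr)
    also have "\<dots> = (t ^ m) powr (p / real m)" using tpos by (simp add: powr_realpow)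
    also have "\<dots> \<ge> (1 / (2 * V)) powr (p / real m)"
      using tm V1 qpos by (intro powr_mono2) auto
    finally have "t powr p \<ge> (1 / (2 * V)) powr (p / real m)" .
    moreover have "(1 / (2 * V)) powr (p / real m) = c * a n"
    proof -
      have "1 / (2 * V) = (1/2) * (1 / V)" by simp
      then have "(1 / (2 * V)) powr (p / real m) = (1/2) powr (p / real m) * (1 / V) powr (p / real m)"
        by (simp only: powr_mult)
      also have "(1 / V) powr (p / real m) = 1 / V powr (p / real m)"
        by (simp add: powr_divide)
      finally show ?thesis unfolding c_def a_def V_def by simp
    qed
    ultimately show ?thesis unfolding t_def by simp
  qed
  define M where "M = (\<Sum>i. cmod (x i) powr p)"
  have xs: "summable (\<lambda>i. cmod (x i) powr p)" using x unfolding lp_def by simp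
  have bnd: "(\<Sum>n\<in>A \<inter> {..N}. a n) \<le> M / c" for N
  proof -
    have "c * (\<Sum>n\<in>A \<inter> {..N}. a n) = (\<Sum>n\<in>A \<inter> {..N}. c * a n)"
      by (simp add: sum_distrib_left)
    also have "\<dots> \<le> (\<Sum>n\<in>A \<inter> {..N}. cmod (x n) powr p)"
      using key by (intro sum_mono) auto
    also have "\<dots> \<le> (\<Sum>n\<in>{..N}. cmod (x n) powr p)"
      by (intro sum_mono2) auto
    also have "\<dots> \<le> M" unfolding M_def
      by (rule sum_le_suminf[OF xs]) auto
    finally show ?thesis using cpos by (simp add: pos_le_divide_eq mult.commute)
  qed
  have "summable a" by (rule dens_sum[OF a0 adec dpos dens bnd])
  then have "summable (\<lambda>j. a (Suc j))" by (simp only: summable_Suc_iff)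
  moreover have "a (Suc j) = 1 / cmod (\<Prod>k\<in>{2..j+2}. w k) powr (p / real m)" for j
    unfolding a_def W_def by simp
  ultimately show False using ns by simp
qed


theorem proposition3p2:
  fixes p :: real and w :: "nat \<Rightarrow> complex" and m :: nat
  assumes "1 \<le> p"
    and "\<exists>C. \<forall>n\<ge>2. cmod (w n) \<le> C"
    and "\<forall>n\<ge>2. w n \<noteq> 0"
    and "\<forall>n\<ge>2. cmod (w n) \<ge> 1"
    and "m \<ge> 2"
    and "\<not> summable (\<lambda>j. 1 / cmod (\<Prod>k\<in>{2..j+2}. w k) powr (p / real m))"
  shows "(\<forall>x\<in>lp p. \<not> freq_hypercyclic p (bshift w) (\<lambda>i. x i ^ m))
         \<and> \<not> (\<exists>A. freq_hypercyclic_algebra p (bshift w) A)"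
proof
  show P1: "\<forall>x\<in>lp p. \<not> freq_hypercyclic p (bshift w) (\<lambda>i. x i ^ m)"
    using part1[OF assms(1) assms(4) assms(5) assms(6)] by blast
  show "\<not> (\<exists>A. freq_hypercyclic_algebra p (bshift w) A)"
  proof
    assume "\<exists>A. freq_hypercyclic_algebra p (bshift w) A"
    then obtain A where hA: "freq_hypercyclic_algebra p (bshift w) A" by blast
    then have sub: "lp_subalgebra p A" and ne: "A \<noteq> {\<lambda>i. 0}"
      and fh: "\<forall>x\<in>A. x \<noteq> (\<lambda>i. 0) \<longrightarrow> freq_hypercyclic p (bshift w) x"
      unfolding freq_hypercyclic_algebra_def by auto
    have zA: "(\<lambda>i. 0) \<in> A" and Alp: "A \<subseteq> lp p"
      and mul: "\<forall>x\<in>A. \<forall>y\<in>A. (\<lambda>i. x i * y i) \<in> A"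
      using sub unfolding lp_subalgebra_def by auto
    obtain x where xA: "x \<in> A" and xnz: "x \<noteq> (\<lambda>i. 0)" using ne zA by blast
    have pw: "(\<lambda>i. x i ^ Suc k) \<in> A" for k
    proof (induction k)
      case 0 then show ?case using xA by simp
    next
      case (Suc k)
      have "(\<lambda>i. x i * x i ^ Suc k) \<in> A" using mul[rule_format, OF xA Suc.IH] by simp
      then show ?case by simp
    qed
    have ymA: "(\<lambda>i. x i ^ m) \<in> A" using pw[of "m - 1"] assms(5) by simp
    obtain j where "x j \<noteq> 0" using xnz by blast
    then have "(\<lambda>i. x i ^ m) \<noteq> (\<lambda>i. 0)" by (metis power_not_zero)
    then have "freq_hypercyclic p (bshift w) (\<lambda>i. x i ^ m)" using fh ymA by blast
    moreover have "x \<in> lp p" using xA Alp by blast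
    ultimately show False using P1 by blast
  qed
qed

end
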